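(* Let $R$ be a finite Blaschke product. Then $X_R$ is a full Hilbert bimodule over $A=C(\mathbb{T})$ without completion (i.e. $X_R=C(\mathbb{T})$ is already complete with respect to the norm $\|\xi\|_2=\|\langle\xi,\xi\rangle_A\|^{1/2}$, and the closed span of $\langle X_R,X_R\rangle_A$ is $A$). The left action $\phi:A\to\mathcal{L}(X_R)$ is unital and faithful.
   Context: A finite Blaschke product is $R(z)=\lambda\prod_{k=1}^n\frac{z-z_k}{1-\overline{z_k}z}$ with $n\ge1$, $\lambda\in\mathbb{T}$, $z_k$ in the open unit disk. The Aleksandrov operator of $R$ is $A_R(a)(w)=\sum_{z\in R^{-1}(w)}\frac{1}{|R'(z)|}a(z)$ for $a\in C(\mathbb{T})$, $w\in\mathbb{T}$. Let $A=C(\mathbb{T})$ and $X_R=C(\mathbb{T})$ as an $A$-$A$ bimodule via $(a\cdot\xi\cdot b)(z)=a(z)\xi(z)b(R(z))$, with $A$-valued inner product $\langle\xi,\eta\rangle_A=A_R(\overline{\xi}\eta)$; $\phi(a)\xi=a\cdot\xi$ is the left action and $\mathcal{L}(X_R)$ the adjointable operators. *)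

theory Defs
  imports "HOL-Analysis.Analysis"
begin

abbreviation circle :: "complex set" where
  "circle \<equiv> sphere 0 1"

text \<open>Elements of C(T) are represented by functions complex => complex,
  continuous on T; only their values on T matter.\<close>
definition contT :: "(complex \<Rightarrow> complex) \<Rightarrow> bool" where
  "contT f \<longleftrightarrow> continuous_on circle f"

definition blaschke :: "complex \<Rightarrow> complex list \<Rightarrow> complex \<Rightarrow> complex" where
  "blaschke lam zs z = lam * (\<Prod>k<length zs. (z - zs ! k) / (1 - cnj (zs ! k) * z))"

definition is_finite_blaschke :: "(complex \<Rightarrow> complex) \<Rightarrow> bool" where
  "is_finite_blaschke R \<longleftrightarrow>
     (\<exists>lam zs. zs \<noteq> [] \<and> cmod lam = 1 \<and> (\<forall>a\<in>set zs. cmod a < 1) \<and> R = blaschke lam zs)"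

definition aleksandrov :: "(complex \<Rightarrow> complex) \<Rightarrow> (complex \<Rightarrow> complex) \<Rightarrow> complex \<Rightarrow> complex" where
  "aleksandrov R a w = (\<Sum>z\<in>{z\<in>circle. R z = w}. a z / complex_of_real (cmod (deriv R z)))"

definition ipX :: "(complex \<Rightarrow> complex) \<Rightarrow> (complex \<Rightarrow> complex) \<Rightarrow> (complex \<Rightarrow> complex) \<Rightarrow> complex \<Rightarrow> complex" where
  "ipX R \<xi> \<eta> = aleksandrov R (\<lambda>z. cnj (\<xi> z) * \<eta> z)"

definition lact :: "(complex \<Rightarrow> complex) \<Rightarrow> (complex \<Rightarrow> complex) \<Rightarrow> complex \<Rightarrow> complex" where
  "lact a \<xi> = (\<lambda>z. a z * \<xi> z)"

definition ract :: "(complex \<Rightarrow> complex) \<Rightarrow> (complex \<Rightarrow> complex) \<Rightarrow> (complex \<Rightarrow> complex) \<Rightarrow> complex \<Rightarrow> complex" where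
  "ract R \<xi> b = (\<lambda>z. \<xi> z * b (R z))"

definition supT :: "(complex \<Rightarrow> complex) \<Rightarrow> real" where
  "supT f = Sup ((\<lambda>w. cmod (f w)) ` circle)"

definition norm2 :: "(complex \<Rightarrow> complex) \<Rightarrow> (complex \<Rightarrow> complex) \<Rightarrow> real" where
  "norm2 R \<xi> = sqrt (supT (ipX R \<xi> \<xi>))"

end

theory Submission
  imports Defs
begin

definition bf :: "complex \<Rightarrow> complex \<Rightarrow> complex" where
  "bf a z = (z - a) / (1 - cnj a * z)"

lemma prod_nth_list: "(\<Prod>k<length zs. f (zs ! k)) = (\<Prod>a\<leftarrow>zs. (f a :: complex))"
  by (induction zs) (simp_all add: prod.lessThan_Suc_shift del: prod.lessThan_Suc)

lemma blaschke_list: "blaschke lam zs z = lam * (\<Prod>a\<leftarrow>zs. bf a z)"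
proof -
  have "blaschke lam zs z = lam * (\<Prod>k<length zs. bf (zs!k) z)" by (simp add: blaschke_def bf_def)
  then show ?thesis using prod_nth_list[where f="\<lambda>a. bf a z" and zs=zs] by (simp only:)
qed

lemma unit_nz: assumes "cmod z = 1" "cmod a < 1" shows "1 - cnj a * z \<noteq> 0" "z \<noteq> a"
proof -
  show "z \<noteq> a" using assms by auto
  show "1 - cnj a * z \<noteq> 0"
  proof
    assume "1 - cnj a * z = 0"
    then have "cmod (cnj a * z) = 1" by (metis eq_iff_diff_eq_0 norm_one)
    then show False using assms by (simp add: norm_mult)
  qed
qed

lemma bf_deriv: assumes "1 - cnj a * z \<noteq> 0"
  shows "(bf a has_field_derivative (1 - cnj a * a) / (1 - cnj a * z)^2) (at z)"
proof -
  have d1: "((\<lambda>z. z - a) has_field_derivative 1) (at z)"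
    using DERIV_diff[OF DERIV_ident DERIV_const[of a]] by simp
  have d2: "((\<lambda>z. 1 - cnj a * z) has_field_derivative (- cnj a)) (at z)"
    using DERIV_diff[OF DERIV_const[of 1] DERIV_cmult[OF DERIV_ident, of "cnj a"]] by simp
  have eq: "bf a = (\<lambda>z. (z - a) / (1 - cnj a * z))" by (rule ext) (simp add: bf_def)
  have eq2: "(1 * (1 - cnj a * z) - (z - a) * (- cnj a)) / ((1 - cnj a * z) * (1 - cnj a * z))
     = (1 - cnj a * a) / (1 - cnj a * z)^2"
    by (simp add: algebra_simps power2_eq_square)
  show ?thesis unfolding eq eq2[symmetric] by (rule DERIV_divide[OF d1 d2 assms])
qed

lemma one_minus_eq: assumes "cmod z = 1" shows "1 - cnj a * z = z * cnj (z - a)"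
proof -
  have "z * cnj z = 1" using assms by (metis complex_norm_square mult.commute of_real_1 power_one)
  moreover have "z * cnj (z - a) = z * cnj z - cnj a * z" by (simp add: right_diff_distrib)
  ultimately show ?thesis by simp
qed

lemma bf_norm: assumes "cmod z = 1" "cmod a < 1" shows "cmod (bf a z) = 1"
proof -
  have nz: "cmod (z - a) \<noteq> 0" using assms by auto
  have "cmod (z * cnj (z - a)) = cmod (z - a)" by (simp only: norm_mult complex_mod_cnj assms(1) mult_1)
  then show ?thesis unfolding bf_def one_minus_eq[OF assms(1)] norm_divide
    using nz by (simp only:) (rule divide_self, assumption)
qed

definition Pt :: "complex \<Rightarrow> complex \<Rightarrow> real" where
  "Pt a z = (1 - cmod a ^ 2) / cmod (z - a) ^ 2"

definition PP :: "complex list \<Rightarrow> complex \<Rightarrow> real" where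
  "PP zs z = (\<Sum>a\<leftarrow>zs. Pt a z)"

definition BB :: "complex list \<Rightarrow> complex \<Rightarrow> complex" where
  "BB zs z = (\<Prod>a\<leftarrow>zs. bf a z)"

lemma bf_deriv_circle: assumes "cmod z = 1" "cmod a < 1"
  shows "(bf a has_field_derivative (bf a z * cnj z * of_real (Pt a z))) (at z)"
proof -
  have nz: "1 - cnj a * z \<noteq> 0" "z \<noteq> a" using unit_nz[OF assms] by auto
  have z0: "z \<noteq> 0" using assms by auto
  have h1: "1 - cnj a * z = z * cnj (z - a)" by (rule one_minus_eq[OF assms(1)])
  have h2: "(complex_of_real (cmod (z-a))) ^ 2 = (z - a) * cnj (z - a)"
    using complex_norm_square[of "z - a"] by (simp only: of_real_power)
  have h3: "cnj a * a = (complex_of_real (cmod a)) ^ 2" using complex_norm_square[of a] by (simp only: of_real_power mult.commute)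
  have zc: "z * cnj z = 1" using assms by (metis complex_norm_square mult.commute of_real_1 power_one)
  have h4: "cnj z = 1 / z" using zc z0 by (simp add: field_simps)
  have c0: "cnj (z - a) \<noteq> 0" using nz by simp
  define A where "A = (complex_of_real (cmod a)) ^ 2"
  define c where "c = cnj (z - a)"
  have w0: "z - a \<noteq> 0" using nz by simp
  have L: "(z - a)/(z*c) * (1/z) * ((1-A)/((z - a)*c)) = (1-A)/(z*c)^2"
    using w0 c0 z0 unfolding c_def[symmetric] by (simp add: field_simps power2_eq_square)
  have e1: "bf a z = (z - a)/(z*c)" unfolding bf_def h1 c_def ..
  have e2: "complex_of_real (Pt a z) = (1-A)/((z - a)*c)"
    unfolding Pt_def of_real_divide of_real_diff of_real_power h2 A_def c_def by simp
  have e3: "(1 - cnj a * a) / (1 - cnj a * z)^2 = (1-A)/(z*c)^2"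
    unfolding h1 h3 A_def c_def ..
  have "bf a z * cnj z * of_real (Pt a z) = (1 - cnj a * a) / (1 - cnj a * z)^2"
    unfolding e1 e2 e3 h4 by (rule L)
  then show ?thesis using bf_deriv[OF nz(1)] by simp
qed

lemma BB_deriv: assumes "cmod z = 1" "\<forall>a\<in>set zs. cmod a < 1"
  shows "(BB zs has_field_derivative (BB zs z * cnj z * of_real (PP zs z))) (at z)"
  using assms(2)
proof (induction zs)
  case Nil
  then show ?case by (simp add: BB_def PP_def)
next
  case (Cons a zs)
  have e: "BB (a # zs) = (\<lambda>z. bf a z * BB zs z)" by (rule ext) (simp add: BB_def)
  have "((\<lambda>z. bf a z * BB zs z) has_field_derivative
      (bf a z * cnj z * of_real (Pt a z)) * BB zs z + bf a z * (BB zs z * cnj z * of_real (PP zs z))) (at z)"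
    using DERIV_mult'[OF bf_deriv_circle[OF assms(1)] Cons.IH, of a] Cons.prems by (simp add: algebra_simps)
  moreover have "(bf a z * cnj z * of_real (Pt a z)) * BB zs z + bf a z * (BB zs z * cnj z * of_real (PP zs z))
     = BB (a # zs) z * cnj z * of_real (PP (a # zs) z)"
    by (simp add: BB_def PP_def algebra_simps)
  ultimately show ?case unfolding e by simp
qed

lemma BB_norm: assumes "cmod z = 1" "\<forall>a\<in>set zs. cmod a < 1" shows "cmod (BB zs z) = 1"
  using assms(2) by (induction zs) (auto simp: BB_def norm_mult bf_norm[OF assms(1)])

lemma Pt_bounds: assumes "cmod z = 1" "cmod a < 1"
  shows "(1 - cmod a ^ 2) / 4 \<le> Pt a z" "Pt a z \<le> (1 - cmod a ^ 2) / (1 - cmod a) ^ 2" "0 < Pt a z"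
proof -
  have n: "0 < 1 - cmod a ^ 2" using assms(2) by (simp add: abs_square_less_1)
  have d1: "cmod (z - a) \<le> 2" using norm_triangle_ineq4[of z a] assms by simp
  have d2: "1 - cmod a \<le> cmod (z - a)" using norm_triangle_ineq2[of z a] assms by simp
  have d0: "0 < cmod (z - a)" using assms by auto
  have "cmod (z - a) ^ 2 \<le> 4" using d1 d0 power_mono[OF d1, of 2] by simp
  then show "(1 - cmod a ^ 2) / 4 \<le> Pt a z" unfolding Pt_def using n d0
    by (intro divide_left_mono) auto
  have "(1 - cmod a) ^ 2 \<le> cmod (z - a) ^ 2" using d2 assms(2) by (intro power_mono) auto
  then show "Pt a z \<le> (1 - cmod a ^ 2) / (1 - cmod a) ^ 2" unfolding Pt_def using n d0 assms(2)
    by (intro divide_left_mono) auto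
  show "0 < Pt a z" unfolding Pt_def using n d0 by simp
qed

lemma antideriv:
  fixes p :: "real \<Rightarrow> real"
  assumes cp: "continuous_on UNIV p"
  shows "((\<lambda>t. integral {0..t} p - integral {t..0} p) has_real_derivative p x) (at x)"
proof -
  define L where "L = \<bar>x\<bar> + 1"
  have L: "-L < x" "x < L" "0 < L" unfolding L_def by auto
  have cL: "continuous_on {-L..L} p" using cp by (rule continuous_on_subset) auto
  have d: "((\<lambda>u. integral {-L..u} p) has_real_derivative p x) (at x)"
    using integral_has_real_derivative[OF cL, of x] at_within_Icc_at[of "-L" x L] L by auto
  have d2: "((\<lambda>u. integral {-L..u} p - integral {-L..0} p) has_real_derivative p x) (at x)"
    using DERIV_diff[OF d DERIV_const[of "integral {-L..0} p"]] by simp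
  show ?thesis
  proof (rule has_field_derivative_transform_within_open[OF d2, of "{-L<..<L}"])
    fix u assume u: "u \<in> {-L<..<L}"
    show "integral {-L..u} p - integral {-L..0} p = integral {0..u} p - integral {u..0} p"
    proof (cases "0 \<le> u")
      case True
      have "integral {-L..0} p + integral {0..u} p = integral {-L..u} p"
        using True L u by (intro Henstock_Kurzweil_Integration.integral_combine integrable_continuous_real continuous_on_subset[OF cp]) auto
      moreover have "integral {u..0} p = 0"
        using True by (cases "u = 0") auto
      ultimately show ?thesis by simp
    next
      case False
      have "integral {-L..u} p + integral {u..0} p = integral {-L..0} p"
        using False L u by (intro Henstock_Kurzweil_Integration.integral_combine integrable_continuous_real continuous_on_subset[OF cp]) auto
      moreover have "integral {0..u} p = 0"
        using False by auto
      ultimately show ?thesis by simp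
    qed
  qed (use L in auto)
qed

lemma cis_eq_int: assumes "cis a = cis b" shows "\<exists>n::int. a = b + 2 * pi * of_int n"
proof -
  have "cis (a - b) = 1" using assms by (simp add: cis_divide[symmetric])
  then have "exp (\<i> * complex_of_real (a - b)) = 1" by (simp add: cis_conv_exp)
  then obtain n :: int where "Im (\<i> * complex_of_real (a - b)) = of_int (2 * n) * pi"
    unfolding exp_eq_1 by blast
  then have "a = b + 2 * pi * of_int n" by (simp add: algebra_simps)
  then show ?thesis by blast
qed

lemma cis_shift_int: "cis (a + 2 * pi * of_int n) = cis a"
proof -
  have "cis (2 * pi * of_int n) = 1" by (rule cis_multiple_2pi) simp
  then show ?thesis by (simp add: cis_mult[symmetric])
qed

lemma PP_nonneg: "(\<forall>a\<in>set ys. cmod a < 1) \<Longrightarrow> cmod z = 1 \<Longrightarrow> 0 \<le> PP ys z"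
  unfolding PP_def by (induction ys) (auto intro: add_nonneg_nonneg less_imp_le Pt_bounds(3))

lemma PP_upper: "(\<forall>a\<in>set ys. cmod a < 1) \<Longrightarrow> cmod z = 1 \<Longrightarrow>
    PP ys z \<le> (\<Sum>a\<leftarrow>ys. (1 - cmod a ^ 2) / (1 - cmod a) ^ 2)"
  unfolding PP_def by (induction ys) (auto intro: add_mono Pt_bounds(2))

lemma PP_lower: assumes h: "\<forall>a\<in>set ys. cmod a < 1" "cmod z = 1" and ne: "ys \<noteq> []" shows
    "(1 - cmod (hd ys) ^ 2) / 4 \<le> PP ys z"
proof (cases ys)
  case (Cons a r)
  have "0 \<le> PP r z" using h Cons by (intro PP_nonneg) auto
  moreover have "(1 - cmod a ^ 2) / 4 \<le> Pt a z" using h Cons by (intro Pt_bounds(1)) auto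
  ultimately show ?thesis using Cons by (simp add: PP_def)
qed (use ne in simp)

lemma PP_cont: "(\<forall>a\<in>set ys. cmod a < 1) \<Longrightarrow> continuous_on UNIV (\<lambda>t. PP ys (cis t))"
proof (induction ys)
  case Nil
  then show ?case by (simp add: PP_def)
next
  case (Cons a ys)
  have "continuous_on UNIV (\<lambda>t. Pt a (cis t))"
    unfolding Pt_def using Cons.prems by (intro continuous_intros) auto
  moreover have "(\<lambda>t. PP (a # ys) (cis t)) = (\<lambda>t. Pt a (cis t) + PP ys (cis t))"
    by (simp add: PP_def)
  moreover have "continuous_on UNIV (\<lambda>t. PP ys (cis t))" using Cons by auto
  ultimately show ?case by (simp only: continuous_on_add)
qed

context
  fixes lam :: complex and zs :: "complex list"
  assumes nz: "zs \<noteq> []" and lam1: "cmod lam = 1" and zs1: "\<forall>a\<in>set zs. cmod a < 1"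
begin

lemma R_eq: "blaschke lam zs = (\<lambda>z. lam * BB zs z)"
  by (rule ext) (simp add: blaschke_list BB_def)

lemma R_deriv: assumes "cmod z = 1"
  shows "(blaschke lam zs has_field_derivative (blaschke lam zs z * cnj z * of_real (PP zs z))) (at z)"
  unfolding R_eq using DERIV_cmult[OF BB_deriv[OF assms zs1], of lam] by (simp add: mult.assoc)

lemma R_norm: "cmod z = 1 \<Longrightarrow> cmod (blaschke lam zs z) = 1"
  unfolding R_eq by (simp add: norm_mult BB_norm zs1 lam1)

lemma deriv_norm: assumes "cmod z = 1" shows "cmod (deriv (blaschke lam zs) z) = PP zs z"
proof -
  have "deriv (blaschke lam zs) z = blaschke lam zs z * cnj z * of_real (PP zs z)"
    by (rule DERIV_imp_deriv[OF R_deriv[OF assms]])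
  then show ?thesis using R_norm[OF assms] assms PP_nonneg[OF zs1 assms] by (simp add: norm_mult)
qed

lemma PP_bnds: "\<exists>c C. 0 < c \<and> (\<forall>z. cmod z = 1 \<longrightarrow> c \<le> PP zs z \<and> PP zs z \<le> C)"
proof -
  have "cmod (hd zs) < 1" using nz zs1 by auto
  then have "0 < (1 - cmod (hd zs) ^ 2) / 4" by (simp add: abs_square_less_1)
  then show ?thesis using PP_lower[OF zs1 _ nz] PP_upper[OF zs1] by blast
qed

lemma PP_pos: "cmod z = 1 \<Longrightarrow> 0 < PP zs z"
  using PP_bnds by force

lemma lift0: "\<exists>\<theta>. (\<forall>t. (\<theta> has_real_derivative PP zs (cis t)) (at t)) \<and>
                 (\<forall>t. blaschke lam zs (cis t) = cis (\<theta> t))"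
proof -
  define R where "R = blaschke lam zs"
  define p where "p = (\<lambda>t. PP zs (cis t))"
  have cp: "continuous_on UNIV p" unfolding p_def by (rule PP_cont[OF zs1])
  define \<theta> where "\<theta> = (\<lambda>t. Arg (R 1) + (integral {0..t} p - integral {t..0} p))"
  have d\<theta>: "(\<theta> has_real_derivative p t) (at t)" for t
    unfolding \<theta>_def using DERIV_add[OF DERIV_const[of "Arg (R 1)"] antideriv[OF cp, of t]] by simp
  define \<phi> where "\<phi> = (\<lambda>t. R (cis t) * cis (- \<theta> t))"
  have d\<phi>: "(\<phi> has_vector_derivative 0) (at t)" for t
  proof -
    have cisd: "(cis has_vector_derivative \<i> * cis t) (at t)"
      using has_derivative_cis[OF has_derivative_ident, of t UNIV]
      by (simp add: has_vector_derivative_def)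
    have A: "((\<lambda>t. R (cis t)) has_vector_derivative (\<i> * cis t) * (R (cis t) * cnj (cis t) * of_real (p t))) (at t)"
      using field_vector_diff_chain_at[OF cisd R_deriv[of "cis t", folded R_def]] by (simp add: o_def p_def)
    have m\<theta>: "((\<lambda>x. - \<theta> x) has_derivative (\<lambda>h. h * (- p t))) (at t)"
      using DERIV_minus[OF d\<theta>[of t]] unfolding has_field_derivative_def
      by (rule has_derivative_eq_rhs) (simp add: fun_eq_iff)
    have "((\<lambda>t. cis (- \<theta> t)) has_derivative (\<lambda>h. (h * (- p t)) *\<^sub>R (\<i> * cis (- \<theta> t)))) (at t)"
      using has_derivative_cis[OF m\<theta>] by simp
    then have B: "((\<lambda>t. cis (- \<theta> t)) has_vector_derivative (- p t) *\<^sub>R (\<i> * cis (- \<theta> t))) (at t)"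
      unfolding has_vector_derivative_def
      by (rule has_derivative_eq_rhs) (simp add: fun_eq_iff)
    have C: "(\<phi> has_vector_derivative
        (R (cis t) * ((- p t) *\<^sub>R (\<i> * cis (- \<theta> t))) + (\<i> * cis t) * (R (cis t) * cnj (cis t) * of_real (p t)) * cis (- \<theta> t))) (at t)"
      unfolding \<phi>_def by (rule has_vector_derivative_mult[OF A B])
    have cc: "cis t * cnj (cis t) = 1" by (simp add: cis_cnj cis_mult)
    have "R (cis t) * ((- p t) *\<^sub>R (\<i> * cis (- \<theta> t))) + (\<i> * cis t) * (R (cis t) * cnj (cis t) * of_real (p t)) * cis (- \<theta> t)
       = \<i> * R (cis t) * of_real (p t) * cis (- \<theta> t) * (cis t * cnj (cis t) - 1)"
      by (simp add: scaleR_conv_of_real algebra_simps)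
    also have "\<dots> = 0" by (simp add: cc)
    finally show ?thesis using C by simp
  qed
  obtain c where c: "\<And>t. t \<in> UNIV \<Longrightarrow> \<phi> t = c"
    by (rule has_vector_derivative_zero_constant[of UNIV \<phi>]) (use d\<phi> in auto)
  have R1: "cmod (R 1) = 1" unfolding R_def by (rule R_norm) simp
  then have R1a: "cis (Arg (R 1)) = R 1" by (metis cis_Arg div_by_1 norm_zero of_real_1 sgn_eq zero_neq_one)
  have "\<theta> 0 = Arg (R 1)" unfolding \<theta>_def by simp
  moreover have "cis (Arg (R 1)) * cis (- Arg (R 1)) = 1" by (simp add: cis_mult)
  ultimately have "\<phi> 0 = 1" unfolding \<phi>_def using R1a by simp
  then have c1: "\<phi> t = 1" for t using c by auto
  have "R (cis t) = cis (\<theta> t)" for t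
  proof -
    have "R (cis t) = R (cis t) * cis (- \<theta> t) * cis (\<theta> t)" by (simp add: mult.assoc cis_mult)
    also have "\<dots> = cis (\<theta> t)" using c1[of t] unfolding \<phi>_def by simp
    finally show ?thesis .
  qed
  then show ?thesis using d\<theta> unfolding R_def p_def by blast
qed

end

context
  fixes lam :: complex and zs :: "complex list"
  assumes nz: "zs \<noteq> []" and lam1: "cmod lam = 1" and zs1: "\<forall>a\<in>set zs. cmod a < 1"
begin

lemmas PP_pos' = PP_pos[OF nz lam1 zs1]
lemmas lift0' = lift0[OF nz lam1 zs1]

lemma lift: "\<exists>\<theta> (m::nat). m > 0 \<and> (\<forall>t. (\<theta> has_real_derivative PP zs (cis t)) (at t)) \<and>
   (\<forall>t. blaschke lam zs (cis t) = cis (\<theta> t)) \<and> (\<forall>t. \<theta> (t + 2*pi) = \<theta> t + 2*pi*real m)"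
proof -
  obtain \<theta> where d: "\<And>t. (\<theta> has_real_derivative PP zs (cis t)) (at t)"
    and e: "\<And>t. blaschke lam zs (cis t) = cis (\<theta> t)" using lift0' by blast
  have c2: "cis (t + 2*pi) = cis t" for t using cis_shift_int[of t 1] by simp
  have per: "cis (\<theta> (t + 2*pi)) = cis (\<theta> t)" for t using e[of t] e[of "t + 2*pi"] c2[of t] by simp
  define D where "D = (\<lambda>t. \<theta> (t + 2*pi) - \<theta> t)"
  have dD: "(D has_real_derivative 0) (at t within UNIV)" for t
  proof -
    have "((\<lambda>t. \<theta> (t + 2*pi)) has_real_derivative PP zs (cis (t + 2*pi))) (at t)"
      using d[of "t + 2*pi"] by (simp add: DERIV_shift)
    from DERIV_diff[OF this d[of t]] show ?thesis unfolding D_def using c2[of t] by simp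
  qed
  obtain k where k: "\<And>t. D t = k" using has_field_derivative_zero_constant[of UNIV D] dD by auto
  obtain n :: int where n: "\<theta> (0 + 2*pi) = \<theta> 0 + 2 * pi * of_int n" using cis_eq_int[OF per[of 0]] by blast
  have dpos: "\<exists>y. DERIV \<theta> x :> y \<and> y > 0" for x using d PP_pos' by (metis norm_cis)
  have "\<theta> 0 < \<theta> (2*pi)"
    by (rule DERIV_pos_imp_increasing[of 0 "2*pi" \<theta>]) (use dpos in auto)
  then have npos: "0 < n" using n by (simp add: zero_less_mult_iff)
  define m where "m = nat n"
  have mm: "real m = of_int n" unfolding m_def using npos by simp
  have "\<theta> (t + 2*pi) = \<theta> t + 2*pi*real m" for t
    using k[of t] k[of 0] n mm unfolding D_def by simp
  moreover have "m > 0" unfolding m_def using npos by simp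
  ultimately show ?thesis using d e by blast
qed

end

context
  fixes lam :: complex and zs :: "complex list"
  assumes nz: "zs \<noteq> []" and lam1: "cmod lam = 1" and zs1: "\<forall>a\<in>set zs. cmod a < 1"
begin

lemmas PP_pos'' = PP_pos[OF nz lam1 zs1]
lemmas lift' = lift[OF nz lam1 zs1]

lemma circle_cis: assumes "cmod z = 1" shows "cis (Arg z) = z"
proof -
  have "z \<noteq> 0" using assms by auto
  then show ?thesis using assms by (simp add: cis_Arg sgn_eq)
qed

lemma struct: "\<exists>G (m::nat). m > 0 \<and> continuous_on UNIV G \<and>
   (\<forall>s. {z\<in>circle. blaschke lam zs z = cis s} = (\<lambda>k. cis (G (s + 2*pi*real k))) ` {..<m}) \<and>
   (\<forall>s. inj_on (\<lambda>k. cis (G (s + 2*pi*real k))) {..<m})"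
proof -
  obtain \<theta> and m :: nat where m0: "m > 0" and d: "\<And>t. (\<theta> has_real_derivative PP zs (cis t)) (at t)"
    and e: "\<And>t. blaschke lam zs (cis t) = cis (\<theta> t)" and per: "\<And>t. \<theta> (t + 2*pi) = \<theta> t + 2*pi*real m"
    using lift' by blast
  have itn: "\<theta> (t + 2*pi*real k) = \<theta> t + 2*pi*real m*real k" for t k
  proof (induction k)
    case (Suc k)
    have "\<theta> (t + 2*pi*real (Suc k)) = \<theta> ((t + 2*pi*real k) + 2*pi)" by (simp add: algebra_simps)
    also have "\<dots> = \<theta> (t + 2*pi*real k) + 2*pi*real m" by (rule per)
    also have "\<dots> = \<theta> t + 2*pi*real m*real (Suc k)" using Suc by (simp add: algebra_simps)
    finally show ?case .
  qed simp
  have iti: "\<theta> (t + 2*pi * of_int j) = \<theta> t + 2*pi*real m * of_int j" for t j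
  proof (cases "j \<ge> 0")
    case True
    define k where "k = nat j"
    have "j = int k" using True unfolding k_def by simp
    then show ?thesis using itn[of t k] by simp
  next
    case False
    define k where "k = nat (-j)"
    have kk: "j = - int k" using False unfolding k_def by simp
    have "\<theta> t = \<theta> ((t - 2*pi*real k) + 2*pi*real k)" by simp
    also have "\<dots> = \<theta> (t - 2*pi*real k) + 2*pi*real m*real k" by (rule itn)
    finally show ?thesis using kk by simp
  qed
  have dpos: "\<exists>y. DERIV \<theta> x :> y \<and> y > 0" for x using d PP_pos'' by (metis norm_cis)
  have mono: "\<theta> a < \<theta> b" if "a < b" for a b
    by (rule DERIV_pos_imp_increasing[of a b \<theta>]) (use dpos that in auto)
  have cont\<theta>: "isCont \<theta> x" for x using d DERIV_isCont by blast
  have inj\<theta>: "inj \<theta>"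
  proof (rule injI)
    fix a b assume "\<theta> a = \<theta> b" then show "a = b" using mono[of a b] mono[of b a] by (cases a b rule: linorder_cases) auto
  qed
  have surj\<theta>: "surj \<theta>"
  proof -
    have "\<exists>x. \<theta> x = y" for y
    proof -
      define j where "j = \<lfloor>(y - \<theta> 0) / (2*pi*real m)\<rfloor>"
      have pm: "0 < 2*pi*real m" using m0 by simp
      have "of_int j \<le> (y - \<theta> 0) / (2*pi*real m)" "(y - \<theta> 0) / (2*pi*real m) < of_int j + 1"
        unfolding j_def by linarith+
      then have j1: "2*pi*real m * of_int j \<le> y - \<theta> 0" and j2: "y - \<theta> 0 < 2*pi*real m * (of_int j + 1)"
        using pm by (simp_all add: field_simps)
      have a: "\<theta> (0 + 2*pi * of_int j) \<le> y" using iti[of 0 j] j1 by (simp add: algebra_simps)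
      have b: "y \<le> \<theta> (0 + 2*pi * of_int (j+1))" using iti[of 0 "j+1"] j2 by (simp add: algebra_simps)
      have ab: "0 + 2*pi * of_int j \<le> 0 + 2*pi * of_int (j+1)" by simp
      show ?thesis using IVT'[OF a b ab] cont\<theta> continuous_at_imp_continuous_on by blast
    qed
    then show ?thesis by (metis surjI)
  qed
  define G where "G = inv \<theta>"
  have G1: "\<theta> (G y) = y" for y unfolding G_def by (rule surj_f_inv_f[OF surj\<theta>])
  have G2: "G (\<theta> t) = t" for t unfolding G_def by (rule inv_f_f[OF inj\<theta>])
  have contG: "continuous_on UNIV G"
  proof (rule continuous_at_imp_continuous_on, intro ballI)
    fix y :: real
    have "isCont G (\<theta> (G y))"
      by (rule isCont_inverse_function[of 1]) (auto simp: G2 cont\<theta>)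
    then show "isCont G y" by (simp add: G1)
  qed
  have setq: "{z\<in>circle. blaschke lam zs z = cis s} = (\<lambda>k. cis (G (s + 2*pi*real k))) ` {..<m}" for s
  proof
    show "{z\<in>circle. blaschke lam zs z = cis s} \<subseteq> (\<lambda>k. cis (G (s + 2*pi*real k))) ` {..<m}"
    proof
      fix z assume z: "z \<in> {z\<in>circle. blaschke lam zs z = cis s}"
      then have z1: "cmod z = 1" and zR: "blaschke lam zs z = cis s" by auto
      define t where "t = Arg z"
      have zt: "cis t = z" unfolding t_def by (rule circle_cis[OF z1])
      have "cis (\<theta> t) = cis s" using e[of t] zt zR by simp
      then obtain j :: int where j: "\<theta> t = s + 2*pi * of_int j" using cis_eq_int by blast
      define q where "q = j div int m"
      define r where "r = j mod int m"
      have jqr: "j = int m * q + r" unfolding q_def r_def by simp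
      have r0: "0 \<le> r" "r < int m" unfolding r_def using m0 by simp_all
      have "\<theta> (t + 2*pi * of_int (-q)) = s + 2*pi * of_int r"
        using iti[of t "-q"] j jqr by (simp add: algebra_simps)
      then have Gr: "G (s + 2*pi * of_int r) = t + 2*pi * of_int (-q)" using G2 by metis
      define k where "k = nat r"
      have kr: "real k = of_int r" unfolding k_def using r0 by simp
      have "k < m" unfolding k_def using r0 by simp
      moreover have "cis (G (s + 2*pi*real k)) = z" using Gr kr zt cis_shift_int[of t "-q"] by simp
      ultimately show "z \<in> (\<lambda>k. cis (G (s + 2*pi*real k))) ` {..<m}" by blast
    qed
    show "(\<lambda>k. cis (G (s + 2*pi*real k))) ` {..<m} \<subseteq> {z\<in>circle. blaschke lam zs z = cis s}"
    proof
      fix z assume "z \<in> (\<lambda>k. cis (G (s + 2*pi*real k))) ` {..<m}"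
      then obtain k where zk: "z = cis (G (s + 2*pi*real k))" by blast
      have "blaschke lam zs (cis (G (s + 2*pi*real k))) = cis (s + 2*pi * of_int (int k))"
        using e G1 by simp
      also have "\<dots> = cis s" by (rule cis_shift_int)
      finally show "z \<in> {z\<in>circle. blaschke lam zs z = cis s}" using zk by simp
    qed
  qed
  have injq: "inj_on (\<lambda>k. cis (G (s + 2*pi*real k))) {..<m}" for s
  proof (rule inj_onI)
    fix k1 k2 assume k: "k1 \<in> {..<m}" "k2 \<in> {..<m}" and eq: "cis (G (s + 2*pi*real k1)) = cis (G (s + 2*pi*real k2))"
    obtain n :: int where n: "G (s + 2*pi*real k1) = G (s + 2*pi*real k2) + 2*pi * of_int n"
      using cis_eq_int[OF eq] by blast
    have "s + 2*pi*real k1 = \<theta> (G (s + 2*pi*real k2) + 2*pi * of_int n)" using n G1 by metis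
    also have "\<dots> = s + 2*pi*real k2 + 2*pi*real m * of_int n" using iti G1 by simp
    finally have "2*pi*(real k1 - (real k2 + real m * of_int n)) = 0" by (simp add: algebra_simps)
    then have "real k1 = real k2 + real m * of_int n" by simp
    then have "(of_int (int k1) :: real) = of_int (int k2 + int m * n)" by simp
    then have "int k1 = int k2 + int m * n" by (simp only: of_int_eq_iff)
    then have "\<bar>int m * n\<bar> < int m" using k by auto
    then have "int m * \<bar>n\<bar> < int m * 1" by (simp add: abs_mult)
    then have "\<bar>n\<bar> < 1" using m0 by (simp only: mult_less_cancel_left)
    then have "n = 0" by simp
    with \<open>int k1 = int k2 + int m * n\<close> show "k1 = k2" by simp
  qed
  show ?thesis using m0 contG setq injq by blast
qed

end

lemma circle_cis0: assumes "cmod z = 1" shows "cis (Arg z) = z"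
proof -
  have "z \<noteq> 0" using assms by auto
  then show ?thesis using assms by (simp add: cis_Arg sgn_eq)
qed

lemma circle_cont:
  assumes H: "continuous_on UNIV H" and F: "\<And>s. F (cis s) = H s"
  shows "continuous_on circle F"
proof (unfold continuous_on_eq_continuous_within, intro ballI)
  fix w :: complex assume w: "w \<in> circle"
  then have w1: "cmod w = 1" by simp
  have FA: "F x = H (Arg x)" if "x \<in> circle" for x
    using F[of "Arg x"] circle_cis0[of x] that by simp
  have FB: "F x = H (Arg (- x) + pi)" if "x \<in> circle" for x
  proof -
    have "cmod (- x) = 1" using that by simp
    then have "cis (Arg (- x) + pi) = x" using circle_cis0[of "- x"] minus_cis[of "Arg (- x)"] by simp
    then show ?thesis using F[of "Arg (- x) + pi"] by simp
  qed
  have Hc: "isCont H y" for y using H by (simp add: continuous_on_eq_continuous_at)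
  show "continuous (at w within circle) F"
  proof (cases "w \<in> \<real>\<^sub>\<le>\<^sub>0")
    case False
    have "continuous (at w) (\<lambda>x. H (Arg x))"
      by (rule continuous_at_compose[OF continuous_at_Arg[OF False] Hc, unfolded o_def])
    then have "continuous (at w within circle) (\<lambda>x. H (Arg x))" by (rule continuous_at_imp_continuous_within)
    then show ?thesis by (rule continuous_transform_within[of _ _ _ 1]) (use w FA in auto)
  next
    case True
    have "- w \<notin> \<real>\<^sub>\<le>\<^sub>0" using True w1 by (auto simp: complex_nonpos_Reals_iff complex_eq_iff cmod_eq_Re)
    then have ca: "continuous (at w) (\<lambda>x. Arg (- x))"
      by (intro continuous_at_compose[OF _ continuous_at_Arg, unfolded o_def] continuous_intros)
    have "continuous (at w) (\<lambda>x. H (Arg (- x) + pi))"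
      by (rule continuous_at_compose[OF continuous_add[OF ca continuous_const] Hc, unfolded o_def])
    then have "continuous (at w within circle) (\<lambda>x. H (Arg (- x) + pi))" by (rule continuous_at_imp_continuous_within)
    then show ?thesis by (rule continuous_transform_within[of _ _ _ 1]) (use w FB in auto)
  qed
qed

context
  fixes lam :: complex and zs :: "complex list"
  assumes nz: "zs \<noteq> []" and lam1: "cmod lam = 1" and zs1: "\<forall>a\<in>set zs. cmod a < 1"
begin

lemmas struct' = struct[OF nz lam1 zs1]
lemmas deriv_norm' = deriv_norm[OF nz lam1 zs1]
lemmas PP_pos3 = PP_pos[OF nz lam1 zs1]
lemmas R_norm' = R_norm[OF nz lam1 zs1]
lemmas R_deriv' = R_deriv[OF nz lam1 zs1]

lemma alek: "\<exists>G (m::nat). m > 0 \<and> continuous_on UNIV G \<and>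
   (\<forall>s. {z\<in>circle. blaschke lam zs z = cis s} = (\<lambda>k. cis (G (s + 2*pi*real k))) ` {..<m}) \<and>
   (\<forall>s. inj_on (\<lambda>k. cis (G (s + 2*pi*real k))) {..<m}) \<and>
   (\<forall>s f. aleksandrov (blaschke lam zs) f (cis s) =
      (\<Sum>k<m. f (cis (G (s + 2*pi*real k))) / of_real (PP zs (cis (G (s + 2*pi*real k))))))"
proof -
  obtain G and m :: nat where m0: "m > 0" and cG: "continuous_on UNIV G"
    and setq: "\<And>s. {z\<in>circle. blaschke lam zs z = cis s} = (\<lambda>k. cis (G (s + 2*pi*real k))) ` {..<m}"
    and injq: "\<And>s. inj_on (\<lambda>k. cis (G (s + 2*pi*real k))) {..<m}"
    using struct' by blast
  have "aleksandrov (blaschke lam zs) f (cis s) =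
      (\<Sum>k<m. f (cis (G (s + 2*pi*real k))) / of_real (PP zs (cis (G (s + 2*pi*real k)))))" for s f
  proof -
    have "aleksandrov (blaschke lam zs) f (cis s) =
       (\<Sum>z\<in>(\<lambda>k. cis (G (s + 2*pi*real k))) ` {..<m}. f z / complex_of_real (cmod (deriv (blaschke lam zs) z)))"
      unfolding aleksandrov_def setq ..
    also have "\<dots> = (\<Sum>k<m. f (cis (G (s + 2*pi*real k))) / complex_of_real (cmod (deriv (blaschke lam zs) (cis (G (s + 2*pi*real k))))))"
      by (simp add: sum.reindex[OF injq])
    also have "\<dots> = (\<Sum>k<m. f (cis (G (s + 2*pi*real k))) / of_real (PP zs (cis (G (s + 2*pi*real k)))))"
      by (simp add: deriv_norm')
    finally show ?thesis .
  qed
  then show ?thesis using m0 cG setq injq by blast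
qed

lemma alek_cont: assumes f: "continuous_on circle f"
  shows "continuous_on circle (aleksandrov (blaschke lam zs) f)"
proof -
  obtain G and m :: nat where m0: "m > 0" and cG: "continuous_on UNIV G"
    and fo: "\<And>s f. aleksandrov (blaschke lam zs) f (cis s) =
      (\<Sum>k<m. f (cis (G (s + 2*pi*real k))) / of_real (PP zs (cis (G (s + 2*pi*real k)))))"
    using alek by blast
  define H where "H = (\<lambda>s. (\<Sum>k<m. f (cis (G (s + 2*pi*real k))) / of_real (PP zs (cis (G (s + 2*pi*real k))))))"
  have cGk: "continuous_on UNIV (\<lambda>s. G (s + 2*pi*real k))" for k
    by (rule continuous_on_compose2[OF cG]) (auto intro: continuous_intros)
  have c1: "continuous_on UNIV (\<lambda>s. f (cis (G (s + 2*pi*real k))))" for k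
    by (rule continuous_on_compose2[OF f]) (auto intro: continuous_intros cGk)
  have c2: "continuous_on UNIV (\<lambda>s. PP zs (cis (G (s + 2*pi*real k))))" for k
    by (rule continuous_on_compose2[OF PP_cont[OF zs1] cGk]) auto
  have nz0: "complex_of_real (PP zs (cis t)) \<noteq> 0" for t using PP_pos3[of "cis t"] by simp
  have "continuous_on UNIV H" unfolding H_def
    by (intro continuous_on_sum continuous_on_divide c1 continuous_on_of_real c2)
       (use nz0 in auto)
  then show ?thesis by (rule circle_cont) (simp add: fo H_def)
qed

end

lemma ipX_ract: "ipX R \<xi> (ract R \<eta> b) w = ipX R \<xi> \<eta> w * b w"
  unfolding ipX_def aleksandrov_def ract_def sum_distrib_right
  by (rule sum.cong) auto

lemma ipX_self: "ipX R \<xi> \<xi> w = of_real (\<Sum>z\<in>{z\<in>circle. R z = w}. cmod (\<xi> z) ^ 2 / cmod (deriv R z))"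
  unfolding ipX_def aleksandrov_def of_real_sum
proof (rule sum.cong)
  fix z
  have "cnj (\<xi> z) * \<xi> z = of_real (cmod (\<xi> z) ^ 2)"
    using complex_norm_square[of "\<xi> z"] by (simp add: mult.commute)
  then show "cnj (\<xi> z) * \<xi> z / complex_of_real (cmod (deriv R z)) =
        complex_of_real (cmod (\<xi> z) ^ 2 / cmod (deriv R z))" by simp
qed simp

lemma ipX_self_nonneg: "0 \<le> (\<Sum>z\<in>{z\<in>circle. R z = w}. cmod (\<xi> z) ^ 2 / cmod (deriv R z))"
  by (rule sum_nonneg) simp

context
  fixes lam :: complex and zs :: "complex list"
  assumes nz: "zs \<noteq> []" and lam1: "cmod lam = 1" and zs1: "\<forall>a\<in>set zs. cmod a < 1"
begin

lemmas alek' = alek[OF nz lam1 zs1]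
lemmas alek_cont' = alek_cont[OF nz lam1 zs1]
lemmas deriv_norm'' = deriv_norm[OF nz lam1 zs1]
lemmas PP_pos4 = PP_pos[OF nz lam1 zs1]
lemmas PP_bnds' = PP_bnds[OF nz lam1 zs1]
lemmas R_norm'' = R_norm[OF nz lam1 zs1]
lemmas R_deriv'' = R_deriv[OF nz lam1 zs1]

lemma R_cont: "continuous_on circle (blaschke lam zs)"
proof (rule continuous_at_imp_continuous_on, intro ballI)
  fix x :: complex assume "x \<in> circle"
  then have "cmod x = 1" by simp
  then show "isCont (blaschke lam zs) x" using DERIV_isCont[OF R_deriv''] by blast
qed

lemma Sfin: "\<exists>m>0. \<forall>w\<in>circle. finite {z\<in>circle. blaschke lam zs z = w} \<and> card {z\<in>circle. blaschke lam zs z = w} = m"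
proof -
  obtain G and m :: nat where m0: "m > 0"
    and setq: "\<And>s. {z\<in>circle. blaschke lam zs z = cis s} = (\<lambda>k. cis (G (s + 2*pi*real k))) ` {..<m}"
    and injq: "\<And>s. inj_on (\<lambda>k. cis (G (s + 2*pi*real k))) {..<m}"
    using alek' by blast
  have "finite {z\<in>circle. blaschke lam zs z = w} \<and> card {z\<in>circle. blaschke lam zs z = w} = m"
    if w: "w \<in> circle" for w
  proof -
    have "w = cis (Arg w)" using circle_cis0[of w] w by simp
    then have e: "{z\<in>circle. blaschke lam zs z = w} = (\<lambda>k. cis (G (Arg w + 2*pi*real k))) ` {..<m}"
      using setq[of "Arg w"] by simp
    show ?thesis unfolding e using card_image[OF injq] by simp
  qed
  then show ?thesis using m0 by blast
qed

lemma ipX_cont: "contT \<xi> \<Longrightarrow> contT \<eta> \<Longrightarrow> contT (ipX (blaschke lam zs) \<xi> \<eta>)"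
  unfolding contT_def ipX_def
  by (rule alek_cont', rule continuous_on_mult, rule continuous_on_cnj) auto

lemma bdd: assumes "contT \<xi>" shows "bdd_above ((\<lambda>w. cmod (ipX (blaschke lam zs) \<xi> \<xi> w)) ` circle)"
proof -
  have "compact (ipX (blaschke lam zs) \<xi> \<xi> ` circle)"
    using ipX_cont[OF assms assms] unfolding contT_def by (intro compact_continuous_image) auto
  then obtain a where "\<forall>x\<in>ipX (blaschke lam zs) \<xi> \<xi> ` circle. norm x \<le> a"
    using compact_imp_bounded bounded_iff by metis
  then show ?thesis by (intro bdd_aboveI[of _ a]) auto
qed

lemma supT_nonneg: assumes "contT \<xi>" shows "0 \<le> supT (ipX (blaschke lam zs) \<xi> \<xi>)"
proof -
  have "cmod (ipX (blaschke lam zs) \<xi> \<xi> 1) \<le> supT (ipX (blaschke lam zs) \<xi> \<xi>)"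
    unfolding supT_def by (rule cSUP_upper[OF _ bdd[OF assms]]) simp
  then show ?thesis by (meson norm_ge_zero order_trans)
qed

lemma lowerb: "\<exists>C>0. \<forall>\<xi>. contT \<xi> \<longrightarrow> (\<forall>z\<in>circle. cmod (\<xi> z) ^ 2 \<le> C * supT (ipX (blaschke lam zs) \<xi> \<xi>))"
proof -
  obtain c C where c0: "0 < c" and cC: "\<And>z. cmod z = 1 \<Longrightarrow> c \<le> PP zs z \<and> PP zs z \<le> C"
    using PP_bnds' by blast
  obtain m :: nat where "m > 0" and Sf0: "\<forall>w\<in>circle. finite {z\<in>circle. blaschke lam zs z = w} \<and> card {z\<in>circle. blaschke lam zs z = w} = m"
    using Sfin by metis
  have Sf: "finite {z\<in>circle. blaschke lam zs z = w}" if "w \<in> circle" for w using Sf0 that by blast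
  have C0: "0 < C" using cC[of 1] c0 by simp
  have "cmod (\<xi> z) ^ 2 \<le> C * supT (ipX (blaschke lam zs) \<xi> \<xi>)" if \<xi>: "contT \<xi>" and z: "z \<in> circle" for \<xi> z
  proof -
    define w where "w = blaschke lam zs z"
    have w: "w \<in> circle" unfolding w_def using R_norm'' z by simp
    define T where "T = (\<Sum>z\<in>{z\<in>circle. blaschke lam zs z = w}. cmod (\<xi> z) ^ 2 / cmod (deriv (blaschke lam zs) z))"
    have T0: "0 \<le> T" unfolding T_def by (rule ipX_self_nonneg)
    have "cmod (\<xi> z) ^ 2 / cmod (deriv (blaschke lam zs) z) \<le> T" unfolding T_def
      by (rule member_le_sum) (use Sf[OF w] z w_def in auto)
    moreover have "cmod (\<xi> z) ^ 2 / C \<le> cmod (\<xi> z) ^ 2 / cmod (deriv (blaschke lam zs) z)"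
      using deriv_norm''[of z] cC[of z] PP_pos4[of z] z by (intro divide_left_mono) auto
    ultimately have "cmod (\<xi> z) ^ 2 / C \<le> T" by (rule order_trans[rotated])
    then have "cmod (\<xi> z) ^ 2 \<le> C * T" using C0 by (simp add: pos_divide_le_eq mult.commute)
    moreover have "T = cmod (ipX (blaschke lam zs) \<xi> \<xi> w)" unfolding ipX_self T_def[symmetric] norm_of_real using T0 by simp
    moreover have "cmod (ipX (blaschke lam zs) \<xi> \<xi> w) \<le> supT (ipX (blaschke lam zs) \<xi> \<xi>)"
      unfolding supT_def by (rule cSUP_upper[OF w bdd[OF \<xi>]])
    ultimately have "C * T \<le> C * supT (ipX (blaschke lam zs) \<xi> \<xi>)" and "cmod (\<xi> z) ^ 2 \<le> C * T"
      using C0 by (simp_all add: mult_left_mono)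
    then show ?thesis by linarith
  qed
  then show ?thesis using C0 by blast
qed

lemma upperb: "\<exists>K\<ge>0. \<forall>\<xi> B. contT \<xi> \<longrightarrow> (\<forall>z\<in>circle. cmod (\<xi> z) \<le> B) \<longrightarrow> supT (ipX (blaschke lam zs) \<xi> \<xi>) \<le> K * B ^ 2"
proof -
  obtain c C where c0: "0 < c" and cC: "\<And>z. cmod z = 1 \<Longrightarrow> c \<le> PP zs z \<and> PP zs z \<le> C"
    using PP_bnds' by blast
  obtain m :: nat where "m > 0" and Sf0: "\<forall>w\<in>circle. finite {z\<in>circle. blaschke lam zs z = w} \<and> card {z\<in>circle. blaschke lam zs z = w} = m"
    using Sfin by metis
  have Sf: "finite {z\<in>circle. blaschke lam zs z = w} \<and> card {z\<in>circle. blaschke lam zs z = w} = m" if "w \<in> circle" for w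
    using Sf0 that by blast
  have "supT (ipX (blaschke lam zs) \<xi> \<xi>) \<le> (real m / c) * B ^ 2"
    if \<xi>: "contT \<xi>" and B: "\<forall>z\<in>circle. cmod (\<xi> z) \<le> B" for \<xi> B
    unfolding supT_def
  proof (rule cSUP_least)
    have "(1::complex) \<in> circle" by simp
    then show "circle \<noteq> {}" by (metis ex_in_conv)
    fix w :: complex assume w: "w \<in> circle"
    define T where "T = (\<Sum>z\<in>{z\<in>circle. blaschke lam zs z = w}. cmod (\<xi> z) ^ 2 / cmod (deriv (blaschke lam zs) z))"
    have T0: "0 \<le> T" unfolding T_def by (rule ipX_self_nonneg)
    have "T \<le> of_nat (card {z\<in>circle. blaschke lam zs z = w}) * (B ^ 2 / c)" unfolding T_def
    proof (rule sum_bounded_above)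
      fix z assume z: "z \<in> {z\<in>circle. blaschke lam zs z = w}"
      then have z1: "cmod z = 1" by simp
      have "cmod (\<xi> z) ^ 2 \<le> B ^ 2" using B z by (intro power_mono) auto
      then show "cmod (\<xi> z) ^ 2 / cmod (deriv (blaschke lam zs) z) \<le> B ^ 2 / c"
        using deriv_norm''[OF z1] cC[OF z1] c0 by (intro frac_le) auto
    qed
    then have "T \<le> (real m / c) * B ^ 2" using Sf[OF w] by simp
    moreover have "T = cmod (ipX (blaschke lam zs) \<xi> \<xi> w)" unfolding ipX_self T_def[symmetric] norm_of_real using T0 by simp
    ultimately show "cmod (ipX (blaschke lam zs) \<xi> \<xi> w) \<le> (real m / c) * B ^ 2" by simp
  qed
  moreover have "0 \<le> real m / c" using c0 by simp
  ultimately show ?thesis by blast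
qed

end

theorem proposition3p1:
  fixes R :: "complex \<Rightarrow> complex"
  assumes "is_finite_blaschke R"
  shows
    \<comment> \<open>the inner product is C(T)-valued\<close>
    "(\<forall>\<xi> \<eta>. contT \<xi> \<longrightarrow> contT \<eta> \<longrightarrow> contT (ipX R \<xi> \<eta>))
     \<comment> \<open>right action preserves X_R and inner product is right A-linear\<close>
   \<and> (\<forall>\<xi> b. contT \<xi> \<longrightarrow> contT b \<longrightarrow> contT (ract R \<xi> b))
   \<and> (\<forall>\<xi> \<eta> b. contT \<xi> \<longrightarrow> contT \<eta> \<longrightarrow> contT b \<longrightarrow>
        (\<forall>w\<in>circle. ipX R \<xi> (ract R \<eta> b) w = ipX R \<xi> \<eta> w * b w))
     \<comment> \<open>positivity and definiteness\<close>
   \<and> (\<forall>\<xi>. contT \<xi> \<longrightarrow> (\<forall>w\<in>circle. Im (ipX R \<xi> \<xi> w) = 0 \<and> Re (ipX R \<xi> \<xi> w) \<ge> 0))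
   \<and> (\<forall>\<xi>. contT \<xi> \<longrightarrow> (\<forall>w\<in>circle. ipX R \<xi> \<xi> w = 0) \<longrightarrow> (\<forall>z\<in>circle. \<xi> z = 0))
     \<comment> \<open>completeness w.r.t. norm2, without completion\<close>
   \<and> (\<forall>x :: nat \<Rightarrow> complex \<Rightarrow> complex. (\<forall>n. contT (x n)) \<longrightarrow>
        (\<forall>e>0. \<exists>N. \<forall>m\<ge>N. \<forall>n\<ge>N. norm2 R (\<lambda>z. x m z - x n z) < e) \<longrightarrow>
        (\<exists>y. contT y \<and> (\<lambda>n. norm2 R (\<lambda>z. x n z - y z)) \<longlonglongrightarrow> 0))
     \<comment> \<open>fullness: span of inner products is dense in C(T)\<close>
   \<and> (\<forall>f. contT f \<longrightarrow> (\<forall>e>0. \<exists>(n::nat) \<xi> \<eta>. (\<forall>i<n. contT (\<xi> i) \<and> contT (\<eta> i)) \<and>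
        (\<forall>w\<in>circle. cmod (f w - (\<Sum>i<n. ipX R (\<xi> i) (\<eta> i) w)) < e)))
     \<comment> \<open>left action preserves X_R and is adjointable with adjoint phi(conj a)\<close>
   \<and> (\<forall>a \<xi>. contT a \<longrightarrow> contT \<xi> \<longrightarrow> contT (lact a \<xi>))
   \<and> (\<forall>a \<xi> \<eta>. contT a \<longrightarrow> contT \<xi> \<longrightarrow> contT \<eta> \<longrightarrow>
        (\<forall>w\<in>circle. ipX R (lact a \<xi>) \<eta> w = ipX R \<xi> (lact (\<lambda>z. cnj (a z)) \<eta>) w))
     \<comment> \<open>phi is unital\<close>
   \<and> (\<forall>\<xi>. lact (\<lambda>z. 1) \<xi> = \<xi>)
     \<comment> \<open>phi is faithful\<close>
   \<and> (\<forall>a. contT a \<longrightarrow> (\<forall>\<xi>. contT \<xi> \<longrightarrow> (\<forall>z\<in>circle. lact a \<xi> z = 0)) \<longrightarrow>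
        (\<forall>z\<in>circle. a z = 0))"
proof -
  obtain lam zs where nz: "zs \<noteq> []" and lam1: "cmod lam = 1" and zs1: "\<forall>a\<in>set zs. cmod a < 1"
    and Rdef: "R = blaschke lam zs"
    using assms unfolding is_finite_blaschke_def by blast
  have ipc: "contT \<xi> \<Longrightarrow> contT \<eta> \<Longrightarrow> contT (ipX R \<xi> \<eta>)" for \<xi> \<eta>
    unfolding Rdef by (rule ipX_cont[OF nz lam1 zs1])
  have Rc: "continuous_on circle R" unfolding Rdef by (rule R_cont[OF nz lam1 zs1])
  have Rin: "z \<in> circle \<Longrightarrow> R z \<in> circle" for z unfolding Rdef using R_norm[OF nz lam1 zs1] by simp
  have dn: "z \<in> circle \<Longrightarrow> cmod (deriv R z) = PP zs z" for z
    unfolding Rdef using deriv_norm[OF nz lam1 zs1] by simp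
  have PPp: "z \<in> circle \<Longrightarrow> 0 < PP zs z" for z using PP_pos[OF nz lam1 zs1] by simp
  obtain mm :: nat where mm0: "mm > 0" and Sf: "\<forall>w\<in>circle. finite {z\<in>circle. R z = w} \<and> card {z\<in>circle. R z = w} = mm"
    using Sfin[OF nz lam1 zs1] unfolding Rdef by metis
  have rc: "contT \<xi> \<Longrightarrow> contT b \<Longrightarrow> contT (ract R \<xi> b)" for \<xi> b
    unfolding contT_def ract_def
    by (intro continuous_on_mult continuous_on_compose2[of circle b circle R]) (use Rc Rin in auto)
  have def5: "\<xi> z = 0" if \<xi>: "contT \<xi>" and zero: "\<forall>w\<in>circle. ipX R \<xi> \<xi> w = 0" and z: "z \<in> circle" for \<xi> z
  proof -
    define w where "w = R z"
    have w: "w \<in> circle" unfolding w_def using Rin z .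
    have "(\<Sum>z\<in>{z\<in>circle. R z = w}. cmod (\<xi> z) ^ 2 / cmod (deriv R z)) = 0"
    proof -
      have "ipX R \<xi> \<xi> w = 0" using zero w by blast
      then show ?thesis unfolding ipX_self by (simp only: of_real_eq_0_iff)
    qed
    then have "\<forall>z'\<in>{z\<in>circle. R z = w}. cmod (\<xi> z') ^ 2 / cmod (deriv R z') = 0"
      using sum_nonneg_eq_0_iff[of "{z\<in>circle. R z = w}" "\<lambda>z. cmod (\<xi> z) ^ 2 / cmod (deriv R z)"] Sf w by simp
    then have "cmod (\<xi> z) ^ 2 / cmod (deriv R z) = 0" using z w_def by simp
    then show ?thesis using dn[OF z] PPp[OF z] by simp
  qed
  have compl: "\<exists>y. contT y \<and> (\<lambda>n. norm2 R (\<lambda>z. x n z - y z)) \<longlonglongrightarrow> 0"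
    if xc: "\<forall>n. contT (x n)" and cau: "\<forall>e>0. \<exists>N. \<forall>m\<ge>N. \<forall>n\<ge>N. norm2 R (\<lambda>z. x m z - x n z) < e"
    for x :: "nat \<Rightarrow> complex \<Rightarrow> complex"
  proof -
    obtain C where C0: "C > 0" and low: "\<forall>\<xi>. contT \<xi> \<longrightarrow> (\<forall>z\<in>circle. cmod (\<xi> z) ^ 2 \<le> C * supT (ipX R \<xi> \<xi>))"
      using lowerb[OF nz lam1 zs1] unfolding Rdef by blast
    obtain K where K0: "K \<ge> 0" and up: "\<forall>\<xi> B. contT \<xi> \<longrightarrow> (\<forall>z\<in>circle. cmod (\<xi> z) \<le> B) \<longrightarrow> supT (ipX R \<xi> \<xi>) \<le> K * B ^ 2"
      using upperb[OF nz lam1 zs1] unfolding Rdef by blast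
    have sn: "contT \<xi> \<Longrightarrow> 0 \<le> supT (ipX R \<xi> \<xi>)" for \<xi> unfolding Rdef by (rule supT_nonneg[OF nz lam1 zs1])
    have key: "cmod (\<xi> z) \<le> sqrt C * norm2 R \<xi>" if "contT \<xi>" "z \<in> circle" for \<xi> z
    proof -
      have "cmod (\<xi> z) ^ 2 \<le> C * supT (ipX R \<xi> \<xi>)" using low that by blast
      then have "sqrt (cmod (\<xi> z) ^ 2) \<le> sqrt (C * supT (ipX R \<xi> \<xi>))" by (rule real_sqrt_le_mono)
      then show ?thesis unfolding norm2_def by (simp add: real_sqrt_mult)
    qed
    have dc: "contT (\<lambda>z. x m z - x n z)" for m n using xc unfolding contT_def by (intro continuous_on_diff) auto
    have "uniformly_Cauchy_on circle x"
      unfolding uniformly_Cauchy_on_def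
    proof (intro allI impI)
      fix e :: real assume e: "e > 0"
      define e' where "e' = e / (sqrt C + 1)"
      have sc: "0 < sqrt C + 1" using real_sqrt_ge_zero[of C] C0 by linarith
      have e'0: "e' > 0" unfolding e'_def using e sc by (rule divide_pos_pos)
      have e'e: "sqrt C * e' < e" unfolding e'_def using e sc
        by (simp add: field_simps)
      obtain N where N: "\<forall>m\<ge>N. \<forall>n\<ge>N. norm2 R (\<lambda>z. x m z - x n z) < e'" using cau e'0 by blast
      have "dist (x m z) (x n z) < e" if "z \<in> circle" "m \<ge> N" "n \<ge> N" for z m n
      proof -
        have "dist (x m z) (x n z) = cmod (x m z - x n z)" by (simp add: dist_norm)
        also have "\<dots> \<le> sqrt C * norm2 R (\<lambda>z. x m z - x n z)" using key[OF dc that(1)] by simp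
        also have "\<dots> \<le> sqrt C * e'"
        proof (rule mult_left_mono)
          show "norm2 R (\<lambda>z. x m z - x n z) \<le> e'" using N that(2,3) by (meson less_imp_le)
          show "0 \<le> sqrt C" using C0 by simp
        qed
        finally show ?thesis using e'e by simp
      qed
      then show "\<exists>M. \<forall>z\<in>circle. \<forall>m\<ge>M. \<forall>n\<ge>M. dist (x m z) (x n z) < e" by blast
    qed
    then obtain y where ul: "uniform_limit circle x y sequentially"
      using Cauchy_uniformly_convergent unfolding uniformly_convergent_on_def by blast
    have yc: "contT y" unfolding contT_def
      by (rule uniform_limit_theorem[OF _ ul]) (use xc in \<open>auto simp: contT_def\<close>)
    have "(\<lambda>n. norm2 R (\<lambda>z. x n z - y z)) \<longlonglongrightarrow> 0"
      unfolding LIMSEQ_iff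
    proof (intro allI impI)
      fix r :: real assume r: "r > 0"
      define d where "d = r / (sqrt K + 1)"
      have sk: "0 < sqrt K + 1" using real_sqrt_ge_zero[of K] K0 by linarith
      have d0: "d > 0" unfolding d_def using r sk by (rule divide_pos_pos)
      have dr: "sqrt K * d < r" unfolding d_def using r sk by (simp add: field_simps)
      have "\<forall>\<^sub>F n in sequentially. \<forall>z\<in>circle. dist (x n z) (y z) < d"
        using ul d0 unfolding uniform_limit_iff by blast
      then obtain N where N: "\<And>n. n \<ge> N \<Longrightarrow> \<forall>z\<in>circle. dist (x n z) (y z) < d"
        unfolding eventually_sequentially by blast
      have "norm (norm2 R (\<lambda>z. x n z - y z) - 0) < r" if n: "n \<ge> N" for n
      proof -
        have c: "contT (\<lambda>z. x n z - y z)" using xc yc unfolding contT_def by (intro continuous_on_diff) auto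
        have "\<forall>z\<in>circle. cmod (x n z - y z) \<le> d" using N[OF n] by (auto simp: dist_norm less_imp_le)
        then have "supT (ipX R (\<lambda>z. x n z - y z) (\<lambda>z. x n z - y z)) \<le> K * d ^ 2" using up c by blast
        then have "norm2 R (\<lambda>z. x n z - y z) \<le> sqrt (K * d ^ 2)" unfolding norm2_def by (rule real_sqrt_le_mono)
        also have "\<dots> = sqrt K * d" using d0 by (simp add: real_sqrt_mult)
        finally have "norm2 R (\<lambda>z. x n z - y z) < r" using dr by simp
        moreover have "0 \<le> norm2 R (\<lambda>z. x n z - y z)" unfolding norm2_def using sn[OF c] by simp
        ultimately show ?thesis by simp
      qed
      then show "\<exists>no. \<forall>n\<ge>no. norm (norm2 R (\<lambda>z. x n z - y z) - 0) < r" by blast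
    qed
    then show ?thesis using yc by blast
  qed
  have full: "\<exists>(n::nat) \<xi> \<eta>. (\<forall>i<n. contT (\<xi> i) \<and> contT (\<eta> i)) \<and>
        (\<forall>w\<in>circle. cmod (f w - (\<Sum>i<n. ipX R (\<xi> i) (\<eta> i) w)) < e)"
    if f: "contT f" and e: "e > 0" for f e
  proof -
    define g where "g = ipX R (\<lambda>z. 1) (\<lambda>z. 1)"
    have c1: "contT (\<lambda>z. 1)" unfolding contT_def by simp
    have gc: "contT g" unfolding g_def by (rule ipc[OF c1 c1])
    have gnz: "g w \<noteq> 0" if w: "w \<in> circle" for w
    proof -
      have fin: "finite {z\<in>circle. R z = w}" and cd: "card {z\<in>circle. R z = w} = mm" using Sf w by auto
      have ne: "{z\<in>circle. R z = w} \<noteq> {}" using cd mm0 by (metis card.empty less_irrefl)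
      have "0 < (\<Sum>z\<in>{z\<in>circle. R z = w}. cmod (1::complex) ^ 2 / cmod (deriv R z))"
        by (rule sum_pos[OF fin ne]) (use dn PPp in auto)
      then show ?thesis unfolding g_def ipX_self of_real_eq_0_iff by linarith
    qed
    define f' where "f' = (\<lambda>z. f z / g z)"
    have f'c: "contT f'" using f gc gnz unfolding contT_def f'_def by (intro continuous_on_divide) auto
    define \<eta>0 where "\<eta>0 = ract R (\<lambda>z. 1) f'"
    have \<eta>c: "contT \<eta>0" unfolding \<eta>0_def by (rule rc[OF c1 f'c])
    have "ipX R (\<lambda>z. 1) \<eta>0 w = f w" if "w \<in> circle" for w
      unfolding \<eta>0_def ipX_ract using gnz[OF that] by (simp add: f'_def g_def)
    then have "\<forall>w\<in>circle. cmod (f w - (\<Sum>i<(1::nat). ipX R ((\<lambda>i z. 1) i) ((\<lambda>i. \<eta>0) i) w)) < e" using e by simp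
    then show ?thesis
      by (intro exI[of _ "1::nat"] exI[of _ "\<lambda>i z. 1"] exI[of _ "\<lambda>i. \<eta>0"] conjI) (use c1 \<eta>c in auto)
  qed
  show ?thesis
  proof (intro conjI allI impI ballI)
    show "contT (ipX R \<xi> \<eta>)" if "contT \<xi>" "contT \<eta>" for \<xi> \<eta> using ipc that .
    show "contT (ract R \<xi> b)" if "contT \<xi>" "contT b" for \<xi> b using rc that .
    show "ipX R \<xi> (ract R \<eta> b) w = ipX R \<xi> \<eta> w * b w" for \<xi> \<eta> b w by (rule ipX_ract)
    show "Im (ipX R \<xi> \<xi> w) = 0" for \<xi> w unfolding ipX_self by simp
    show "0 \<le> Re (ipX R \<xi> \<xi> w)" for \<xi> w unfolding ipX_self using ipX_self_nonneg by simp
    show "\<xi> z = 0" if "contT \<xi>" "\<forall>w\<in>circle. ipX R \<xi> \<xi> w = 0" "z \<in> circle" for \<xi> z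
      using def5 that .
    show "\<exists>y. contT y \<and> (\<lambda>n. norm2 R (\<lambda>z. x n z - y z)) \<longlonglongrightarrow> 0"
      if "\<forall>n. contT (x n)" "\<forall>e>0. \<exists>N. \<forall>m\<ge>N. \<forall>n\<ge>N. norm2 R (\<lambda>z. x m z - x n z) < e"
      for x :: "nat \<Rightarrow> complex \<Rightarrow> complex" using compl that .
    show "\<exists>(n::nat) \<xi> \<eta>. (\<forall>i<n. contT (\<xi> i) \<and> contT (\<eta> i)) \<and>
        (\<forall>w\<in>circle. cmod (f w - (\<Sum>i<n. ipX R (\<xi> i) (\<eta> i) w)) < e)"
      if "contT f" "e > 0" for f e using full that .
    show "contT (lact a \<xi>)" if "contT a" "contT \<xi>" for a \<xi>
      using that unfolding contT_def lact_def by (intro continuous_on_mult)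
    show "ipX R (lact a \<xi>) \<eta> w = ipX R \<xi> (lact (\<lambda>z. cnj (a z)) \<eta>) w" for a \<xi> \<eta> w
      unfolding ipX_def lact_def by (simp add: ac_simps)
    show "lact (\<lambda>z. 1) \<xi> = \<xi>" for \<xi> by (simp add: lact_def)
    show "a z = 0" if "contT a" "\<forall>\<xi>. contT \<xi> \<longrightarrow> (\<forall>z\<in>circle. lact a \<xi> z = 0)" "z \<in> circle" for a z
    proof -
      have "contT (\<lambda>z. 1)" unfolding contT_def by simp
      then show ?thesis using that by (auto simp: lact_def)
    qed
  qed
qed

end
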